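(* An almost discrete (Tychonoff) space $X$ is Grothendieck if and only if $X$ is Lindelöf and $t(X)=\omega$.
   Context: A space is almost discrete if it has exactly one non-isolated point. $C_p(X)$ is the space of continuous real-valued functions on $X$ with the pointwise convergence topology. A space $Z$ is a $g$-space if every subset $A\subseteq Z$ such that every infinite subset of $A$ has an accumulation point in $Z$ has compact closure in $Z$. $X$ is Grothendieck if every subspace of $C_p(X)$ is a $g$-space. $t(X)$ denotes the tightness of $X$. *)

theory Defs
  imports "HOL-Analysis.Analysis"
begin

definition tychonoff_space :: "'a topology \<Rightarrow> bool" where
  "tychonoff_space X \<longleftrightarrow> completely_regular_space X \<and> Hausdorff_space X"

definition isolated_point :: "'a topology \<Rightarrow> 'a \<Rightarrow> bool" where
  "isolated_point X x \<longleftrightarrow> x \<in> topspace X \<and> openin X {x}"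

definition almost_discrete :: "'a topology \<Rightarrow> bool" where
  "almost_discrete X \<longleftrightarrow> (\<exists>!x. x \<in> topspace X \<and> \<not> isolated_point X x)"

text \<open>C_p(X): continuous real functions on X (as extensional functions on topspace X)
  with the topology of pointwise convergence, i.e. as a subspace of the product R^X.\<close>
definition Cp :: "'a topology \<Rightarrow> ('a \<Rightarrow> real) topology" where
  "Cp X = subtopology (product_topology (\<lambda>_. euclideanreal) (topspace X))
            {f \<in> extensional (topspace X). continuous_map X euclideanreal f}"

definition g_space :: "'b topology \<Rightarrow> bool" where
  "g_space Z \<longleftrightarrow>
     (\<forall>A. A \<subseteq> topspace Z \<and>
          (\<forall>B. B \<subseteq> A \<and> infinite B \<longrightarrow> Z derived_set_of B \<noteq> {})
          \<longrightarrow> compactin Z (Z closure_of A))"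

definition grothendieck :: "'a topology \<Rightarrow> bool" where
  "grothendieck X \<longleftrightarrow> (\<forall>S. S \<subseteq> topspace (Cp X) \<longrightarrow> g_space (subtopology (Cp X) S))"

text \<open>Countable tightness, t(X) = omega (tightness is by convention at least omega).\<close>
definition countably_tight :: "'a topology \<Rightarrow> bool" where
  "countably_tight X \<longleftrightarrow>
     (\<forall>A x. A \<subseteq> topspace X \<and> x \<in> X closure_of A \<longrightarrow>
        (\<exists>B. B \<subseteq> A \<and> countable B \<and> x \<in> X closure_of B))"

end

theory Submission
  imports Defs
begin

abbreviation PT :: "'a topology \<Rightarrow> ('a \<Rightarrow> real) topology" where
  "PT X \<equiv> product_topology (\<lambda>_. euclideanreal) (topspace X)"

lemma topspace_PT: "topspace (PT X) = extensional (topspace X)"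
  by (auto simp: topspace_product_topology PiE_def)

lemma topspace_Cp:
  "topspace (Cp X) = {f \<in> extensional (topspace X). continuous_map X euclideanreal f}"
  unfolding Cp_def by (auto simp: topspace_PT extensional_def)

lemma Cp_sub:
  assumes "S \<subseteq> topspace (Cp X)"
  shows "subtopology (Cp X) S = subtopology (PT X) S"
proof -
  have "{f \<in> extensional (topspace X). continuous_map X euclideanreal f} \<inter> S = S"
    using assms topspace_Cp[of X] by auto
  then show ?thesis unfolding Cp_def subtopology_subtopology by simp
qed

lemma t1_PT_sub: "t1_space (subtopology (PT X) S)"
  by (intro Hausdorff_imp_t1_space Hausdorff_space_subtopology)
     (simp add: Hausdorff_space_product_topology Hausdorff_space_euclidean)

lemma Hausdorff_PT: "Hausdorff_space (PT X)"
  by (simp add: Hausdorff_space_product_topology Hausdorff_space_euclidean)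

lemma open_coord:
  assumes "x \<in> topspace X" "open V"
  shows "openin (subtopology (PT X) S) {w \<in> topspace (subtopology (PT X) S). w x \<in> V}"
proof -
  have "continuous_map (subtopology (PT X) S) euclideanreal (\<lambda>w. w x)"
  proof (rule continuous_map_from_subtopology)
    show "continuous_map (PT X) euclideanreal (\<lambda>w. w x)"
      using continuous_map_product_projection[of x "topspace X" "\<lambda>_. euclideanreal"] assms(1)
      by blast
  qed
  moreover have "openin euclideanreal V" using assms(2) open_openin by blast
  ultimately show ?thesis by (rule openin_continuous_map_preimage)
qed

lemma acc_contra:
  assumes "t1_space Z" "z \<in> Z derived_set_of R" "openin Z U" "z \<in> U" "finite F"
    "R \<inter> U \<subseteq> insert z F"
  shows False
proof -
  define G where "G = F \<inter> topspace Z - {z}"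
  have fin: "finite G" using assms(5) unfolding G_def by simp
  have "G \<subseteq> topspace Z" unfolding G_def by blast
  then have cl: "closedin Z G"
    using assms(1) fin t1_space_closedin_finite by metis
  have op: "openin Z (U - G)"
    using openin_diff[OF assms(3) cl] .
  have zin: "z \<in> U - G" using assms(4) unfolding G_def by simp
  have "\<forall>T. z \<in> T \<and> openin Z T \<longrightarrow> (\<exists>y. y \<noteq> z \<and> y \<in> R \<and> y \<in> T)"
    using assms(2) unfolding in_derived_set_of by (elim conjE)
  then obtain y where y: "y \<noteq> z" "y \<in> R" "y \<in> U - G"
    using op zin by blast
  have "y \<in> topspace Z" using y(3) openin_subset[OF assms(3)] by blast
  then have "y \<notin> F" using y(1,3) unfolding G_def by blast
  then show False using y(1,2,3) assms(6) by blast
qed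

lemma cocountable:
  assumes L: "Lindelof_space X" and iso: "\<forall>x\<in>topspace X. x \<noteq> p \<longrightarrow> openin X {x}"
    and U: "openin X U" "p \<in> U"
  shows "countable (topspace X - U)"
proof -
  define \<U> where "\<U> = insert U ((\<lambda>x. {x}) ` (topspace X - U))"
  have o: "\<forall>V\<in>\<U>. openin X V"
  proof
    fix V assume "V \<in> \<U>"
    then consider "V = U" | x where "x \<in> topspace X - U" "V = {x}" unfolding \<U>_def by blast
    then show "openin X V"
    proof cases
      case 1 then show ?thesis using U by simp
    next
      case 2
      then have "x \<noteq> p" "x \<in> topspace X" using U(2) by auto
      then show ?thesis using iso 2(2) by simp
    qed
  qed
  have u: "\<Union>\<U> = topspace X"
  proof
    show "\<Union>\<U> \<subseteq> topspace X" using openin_subset[OF U(1)] unfolding \<U>_def by blast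
    show "topspace X \<subseteq> \<Union>\<U>" unfolding \<U>_def by blast
  qed
  have "\<exists>\<V>. countable \<V> \<and> \<V> \<subseteq> \<U> \<and> \<Union>\<V> = topspace X"
  proof -
    have "(\<forall>V\<in>\<U>. openin X V) \<and> \<Union>\<U> = topspace X \<longrightarrow>
      (\<exists>\<V>. countable \<V> \<and> \<V> \<subseteq> \<U> \<and> \<Union>\<V> = topspace X)"
      using L unfolding Lindelof_space_def by (rule spec)
    then show ?thesis using o u by simp
  qed
  then obtain \<V> where V: "countable \<V>" "\<V> \<subseteq> \<U>" "\<Union>\<V> = topspace X"
    by (elim exE conjE)
  have sub: "topspace X - U \<subseteq> \<Union>(\<V> - {U})"
  proof
    fix x assume x: "x \<in> topspace X - U"
    then have "x \<in> \<Union>\<V>" using V(3) by simp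
    then obtain W where W: "W \<in> \<V>" "x \<in> W" by (rule UnionE)
    then have "W \<noteq> U" using x by auto
    then show "x \<in> \<Union>(\<V> - {U})" using W by auto
  qed
  have "countable (\<Union>a\<in>\<V> - {U}. a)"
  proof (rule countable_UN)
    show "countable (\<V> - {U})" using V(1) by simp
    fix a assume "a \<in> \<V> - {U}"
    then have "a \<in> (\<lambda>x. {x}) ` (topspace X - U)" using V(2) unfolding \<U>_def by blast
    then obtain x where "a = {x}" by blast
    then show "countable a" by simp
  qed
  then have "countable (\<Union>(\<V> - {U}))" by simp
  then show ?thesis by (rule countable_subset[OF sub])
qed

lemma cont_support:
  assumes L: "Lindelof_space X" and iso: "\<forall>x\<in>topspace X. x \<noteq> p \<longrightarrow> openin X {x}"
    and p: "p \<in> topspace X" and f: "continuous_map X euclideanreal f"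
  shows "countable {x \<in> topspace X. f x \<noteq> f p}"
proof -
  define N where "N n = topspace X - {x \<in> topspace X. f x \<in> ball (f p) (1 / Suc n)}" for n
  have sub: "{x \<in> topspace X. f x \<noteq> f p} \<subseteq> (\<Union>n. N n)"
  proof
    fix x assume x: "x \<in> {x \<in> topspace X. f x \<noteq> f p}"
    then have "dist (f p) (f x) > 0" by auto
    then obtain n where "inverse (real (Suc n)) < dist (f p) (f x)"
      using reals_Archimedean by blast
    then have "\<not> dist (f p) (f x) < 1 / Suc n" by (simp add: divide_inverse)
    then have "x \<in> N n" using x unfolding N_def by (simp add: mem_ball)
    then show "x \<in> (\<Union>n. N n)" by (rule UN_I[OF UNIV_I])
  qed
  have "countable (\<Union>n. N n)"
  proof (rule countable_UN)
    show "countable (UNIV :: nat set)" by simp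
    fix n
    have "p \<in> {x \<in> topspace X. f x \<in> ball (f p) (1 / Suc n)}" using p by simp
    moreover have "openin euclideanreal (ball (f p) (1 / Suc n))"
      by (metis open_ball open_openin)
    then have "openin X {x \<in> topspace X. f x \<in> ball (f p) (1 / Suc n)}"
      by (rule openin_continuous_map_preimage[OF f])
    ultimately show "countable (N n)" unfolding N_def
      using cocountable[OF L iso] by blast
  qed
  then show ?thesis by (rule countable_subset[OF sub])
qed

lemma cont_const_nbhd:
  assumes iso: "\<forall>x\<in>topspace X. x \<noteq> p \<longrightarrow> openin X {x}"
    and W: "openin X W" "p \<in> W" and c: "\<forall>x\<in>W. f x = c"
  shows "continuous_map X euclideanreal f"
  unfolding continuous_map_def
proof (intro conjI allI impI)
  show "f \<in> topspace X \<rightarrow> topspace euclideanreal" by simp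
  fix U :: "real set" assume "openin euclideanreal U"
  show "openin X {x \<in> topspace X. f x \<in> U}"
  proof (subst openin_subopen, intro ballI)
    fix x assume x: "x \<in> {x \<in> topspace X. f x \<in> U}"
    show "\<exists>T. openin X T \<and> x \<in> T \<and> T \<subseteq> {x \<in> topspace X. f x \<in> U}"
    proof (cases "x = p")
      case True
      then show ?thesis using x W c openin_subset[OF W(1)] by (intro exI[of _ W]) auto
    next
      case False
      then show ?thesis using x iso by (intro exI[of _ "{x}"]) auto
    qed
  qed
qed

lemma lind_from:
  assumes p: "p \<in> topspace X" and co: "\<forall>U. openin X U \<and> p \<in> U \<longrightarrow> countable (topspace X - U)"
  shows "Lindelof_space X"
  unfolding Lindelof_space_def
proof (intro allI impI)
  fix \<U> assume U: "(\<forall>U\<in>\<U>. openin X U) \<and> \<Union>\<U> = topspace X"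
  then have U1: "\<forall>U\<in>\<U>. openin X U" and U2: "\<Union>\<U> = topspace X" by auto
  have "p \<in> \<Union>\<U>" using p U2 by simp
  then obtain U0 where U0: "U0 \<in> \<U>" "p \<in> U0" by (rule UnionE)
  have "\<forall>x\<in>topspace X - U0. \<exists>V\<in>\<U>. x \<in> V"
  proof
    fix x assume "x \<in> topspace X - U0"
    then have "x \<in> \<Union>\<U>" using U2 by simp
    then show "\<exists>V\<in>\<U>. x \<in> V" by (rule UnionE) blast
  qed
  then obtain c where c: "\<forall>x\<in>topspace X - U0. c x \<in> \<U> \<and> x \<in> c x" by metis
  have "openin X U0" using U1 U0 by blast
  then have cU: "countable (topspace X - U0)" using co U0 by blast
  show "\<exists>\<V>. countable \<V> \<and> \<V> \<subseteq> \<U> \<and> \<Union>\<V> = topspace X"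
  proof (intro exI conjI)
    show "countable (insert U0 (c ` (topspace X - U0)))" using cU by simp
    show "insert U0 (c ` (topspace X - U0)) \<subseteq> \<U>" using U0 c by blast
    show "\<Union> (insert U0 (c ` (topspace X - U0))) = topspace X"
    proof
      have "\<Union>\<U> \<subseteq> topspace X" using U2 by simp
      then show "\<Union> (insert U0 (c ` (topspace X - U0))) \<subseteq> topspace X"
        using U0 c by blast
      show "topspace X \<subseteq> \<Union> (insert U0 (c ` (topspace X - U0)))"
        using c by blast
    qed
  qed
qed

definition chi :: "'a topology \<Rightarrow> 'a set \<Rightarrow> 'a \<Rightarrow> real" where
  "chi X C x = (if x \<in> C then 1 else if x \<in> topspace X then 0 else undefined)"

lemma chi_ext: "C \<subseteq> topspace X \<Longrightarrow> chi X C \<in> extensional (topspace X)"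
  unfolding chi_def extensional_def by auto

lemma chi_inj:
  assumes "C \<subseteq> topspace X" "T \<subseteq> topspace X" "chi X C = chi X T"
  shows "C = T"
proof -
  have "x \<in> T" if "x \<in> C" for x
  proof -
    have "chi X T x = 1" using assms(3) that unfolding chi_def by (metis)
    then show ?thesis using assms(1) that unfolding chi_def by (auto split: if_splits)
  qed
  moreover have "x \<in> C" if "x \<in> T" for x
  proof -
    have "chi X C x = 1" using assms(3) that unfolding chi_def by (metis)
    then show ?thesis using assms(2) that unfolding chi_def by (auto split: if_splits)
  qed
  ultimately show ?thesis by blast
qed

lemma notG:
  assumes T: "T \<subseteq> topspace X" "uncountable T"
    and cont: "\<And>C. C \<subseteq> T \<Longrightarrow> countable C \<Longrightarrow> continuous_map X euclideanreal (chi X C)"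
  shows "\<not> grothendieck X"
proof
  assume G: "grothendieck X"
  define S where "S = chi X ` {C. C \<subseteq> T \<and> countable C}"
  have Ssub: "S \<subseteq> topspace (Cp X)"
  proof
    fix f assume "f \<in> S"
    then obtain C where C: "C \<subseteq> T" "countable C" "f = chi X C" unfolding S_def by blast
    then have "C \<subseteq> topspace X" using T(1) by blast
    then show "f \<in> topspace (Cp X)" unfolding topspace_Cp using C chi_ext cont by simp
  qed
  have SP: "S \<subseteq> topspace (PT X)" using Ssub unfolding topspace_Cp topspace_PT by blast
  define Z where "Z = subtopology (PT X) S"
  have Zeq: "subtopology (Cp X) S = Z" using Cp_sub[OF Ssub] unfolding Z_def by simp
  have "\<forall>S. S \<subseteq> topspace (Cp X) \<longrightarrow> g_space (subtopology (Cp X) S)"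
    using G unfolding grothendieck_def .
  then have "g_space (subtopology (Cp X) S)" using Ssub by blast
  then have gZ: "g_space Z" using Zeq by simp
  have tZ: "topspace Z = S" unfolding Z_def topspace_subtopology using SP by blast
  have acc: "\<forall>B. B \<subseteq> S \<and> infinite B \<longrightarrow> Z derived_set_of B \<noteq> {}"
  proof (intro allI impI)
    fix B assume B: "B \<subseteq> S \<and> infinite B"
    obtain g :: "nat \<Rightarrow> _" where g: "inj g" "range g \<subseteq> B"
      using infinite_countable_subset B by blast
    define B' where "B' = range g"
    have B'inf: "infinite B'" unfolding B'_def using range_inj_infinite g(1) .
    have B'S: "B' \<subseteq> S" using g(2) B unfolding B'_def by blast
    have "\<forall>b\<in>S. \<exists>C. C \<subseteq> T \<and> countable C \<and> b = chi X C" unfolding S_def by blast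
    then obtain c where c: "\<forall>b\<in>S. c b \<subseteq> T \<and> countable (c b) \<and> b = chi X (c b)" by metis
    define E where "E = \<Union>(c ` B')"
    have Ec: "countable E" unfolding E_def
    proof (rule countable_UN)
      show "countable B'" unfolding B'_def by simp
      fix b assume "b \<in> B'" then show "countable (c b)" using c B'S by blast
    qed
    have ET: "E \<subseteq> T" unfolding E_def using c B'S by blast
    define K where "K = PiE (topspace X) (\<lambda>x. if x \<in> E then {0,1::real} else {0})"
    have Kc: "compactin (PT X) K" unfolding K_def compactin_PiE
      by (simp add: compactin_euclidean_iff finite_imp_compact)
    have B'K: "B' \<subseteq> K"
    proof
      fix b assume b: "b \<in> B'"
      then have bS: "b \<in> S" using B'S by blast
      then have beq: "b = chi X (c b)" using c by blast
      have "c b \<subseteq> E" unfolding E_def using b by blast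
      moreover have "c b \<subseteq> topspace X" using c bS T(1) by blast
      ultimately have "chi X (c b) \<in> K" unfolding K_def chi_def PiE_def extensional_def by auto
      then show "b \<in> K" using beq by simp
    qed
    have KS: "K \<subseteq> S"
    proof
      fix f assume f: "f \<in> K"
      define C where "C = {x \<in> E. f x = 1}"
      have CT: "C \<subseteq> T" unfolding C_def using ET by blast
      have Cc: "countable C" unfolding C_def using Ec by simp
      have "f = chi X C"
      proof
        fix x
        show "f x = chi X C x"
        proof (cases "x \<in> topspace X")
          case True
          then have "f x \<in> (if x \<in> E then {0,1} else {0})" using f unfolding K_def by blast
          then show ?thesis using True unfolding chi_def C_def by (auto split: if_splits)
        next
          case False
          then have "f x = undefined" using f unfolding K_def PiE_def extensional_def by blast
          moreover have "x \<notin> C" using False CT T(1) by blast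
          ultimately show ?thesis using False unfolding chi_def by simp
        qed
      qed
      then show "f \<in> S" unfolding S_def using CT Cc by blast
    qed
    have "K \<inter> PT X derived_set_of B' \<noteq> {}"
      using compactin_imp_Bolzano_Weierstrass[OF Kc] B'inf B'K by blast
    then obtain z where z: "z \<in> K" "z \<in> PT X derived_set_of B'" by blast
    have "PT X derived_set_of B' \<subseteq> PT X derived_set_of B"
      using derived_set_of_mono g(2) unfolding B'_def by blast
    then have "z \<in> PT X derived_set_of B" using z(2) by blast
    moreover have "z \<in> S" using z(1) KS by blast
    moreover have "S \<inter> B = B" using B by blast
    ultimately have "z \<in> S \<inter> PT X derived_set_of (S \<inter> B)" by simp
    then have "z \<in> Z derived_set_of B" unfolding Z_def derived_set_of_subtopology .
    then show "Z derived_set_of B \<noteq> {}" by blast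
  qed
  have "\<forall>A. A \<subseteq> topspace Z \<and> (\<forall>B. B \<subseteq> A \<and> infinite B \<longrightarrow> Z derived_set_of B \<noteq> {})
          \<longrightarrow> compactin Z (Z closure_of A)"
    using gZ unfolding g_space_def .
  then have "S \<subseteq> topspace Z \<and> (\<forall>B. B \<subseteq> S \<and> infinite B \<longrightarrow> Z derived_set_of B \<noteq> {})
          \<longrightarrow> compactin Z (Z closure_of S)" by (rule spec)
  then have "compactin Z (Z closure_of S)" using tZ acc by simp
  moreover have "Z closure_of S = S" using closure_of_topspace[of Z] tZ by simp
  ultimately have "compactin Z S" by simp
  then have "compactin (PT X) S" unfolding Z_def compactin_subtopology by simp
  then have "closedin (PT X) S" by (rule compactin_imp_closedin[OF Hausdorff_PT])
  then have clS: "PT X closure_of S = S" by (simp add: closure_of_eq)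
  have "chi X T \<in> PT X closure_of S" unfolding in_closure_of
  proof (intro conjI allI impI)
    show "chi X T \<in> topspace (PT X)" using chi_ext T(1) unfolding topspace_PT by blast
    fix U' assume U': "chi X T \<in> U' \<and> openin (PT X) U'"
    then have "\<forall>x\<in>U'. \<exists>U. finite {i \<in> topspace X. U i \<noteq> topspace euclideanreal} \<and>
          (\<forall>i\<in>topspace X. openin euclideanreal (U i)) \<and> x \<in> PiE (topspace X) U \<and> PiE (topspace X) U \<subseteq> U'"
      unfolding openin_product_topology_alt by (elim conjE)
    then obtain U where U: "finite {i \<in> topspace X. U i \<noteq> topspace euclideanreal}"
       "chi X T \<in> PiE (topspace X) U" "PiE (topspace X) U \<subseteq> U'"
      using U' by blast
    define C where "C = T \<inter> {i \<in> topspace X. U i \<noteq> topspace euclideanreal}"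
    have CT: "C \<subseteq> T" unfolding C_def by blast
    have "finite C" unfolding C_def using U(1) by simp
    then have "chi X C \<in> S" unfolding S_def using CT by (simp add: countable_finite)
    moreover have "chi X C \<in> PiE (topspace X) U"
    proof (rule PiE_I)
      fix i assume i: "i \<in> topspace X"
      show "chi X C i \<in> U i"
      proof (cases "U i = topspace euclideanreal")
        case True then show ?thesis by simp
      next
        case False
        then have "chi X C i = chi X T i" using i unfolding chi_def C_def by simp
        then show ?thesis using U(2) i by (simp add: PiE_mem)
      qed
    next
      fix i assume "i \<notin> topspace X"
      then show "chi X C i = undefined" using CT T(1) unfolding chi_def by auto
    qed
    ultimately show "\<exists>y. y \<in> S \<and> y \<in> U'" using U(3) by blast
  qed
  moreover have "chi X T \<notin> S"
  proof
    assume "chi X T \<in> S"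
    then obtain C where C: "C \<subseteq> T" "countable C" "chi X T = chi X C" unfolding S_def by blast
    then have "C = T" using chi_inj[of C X T] T(1) by auto
    then show False using C(2) T(2) by simp
  qed
  ultimately show False using clS by simp
qed

lemma groth_nec:
  assumes p: "p \<in> topspace X" and iso: "\<forall>x\<in>topspace X. x \<noteq> p \<longrightarrow> openin X {x}"
    and G: "grothendieck X"
  shows "Lindelof_space X \<and> countably_tight X"
proof
  show "Lindelof_space X"
  proof (rule ccontr)
    assume nL: "\<not> Lindelof_space X"
    then obtain W where W: "openin X W" "p \<in> W" "uncountable (topspace X - W)"
      using lind_from[OF p] by blast
    have "\<not> grothendieck X"
    proof (rule notG[of "topspace X - W"])
      show "topspace X - W \<subseteq> topspace X" by blast
      show "uncountable (topspace X - W)" by (rule W(3))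
      fix C assume C: "C \<subseteq> topspace X - W" "countable C"
      show "continuous_map X euclideanreal (chi X C)"
      proof (rule cont_const_nbhd[OF iso W(1) W(2)])
        show "\<forall>x\<in>W. chi X C x = 0" using C openin_subset[OF W(1)] unfolding chi_def by auto
      qed
    qed
    then show False using G by simp
  qed
  show "countably_tight X" unfolding countably_tight_def
  proof (intro allI impI)
    fix A x assume Ax: "A \<subseteq> topspace X \<and> x \<in> X closure_of A"
    show "\<exists>B. B \<subseteq> A \<and> countable B \<and> x \<in> X closure_of B"
    proof (rule ccontr)
      assume nB: "\<not> (\<exists>B. B \<subseteq> A \<and> countable B \<and> x \<in> X closure_of B)"
      have xX: "x \<in> topspace X" using Ax unfolding in_closure_of by blast
      have xA: "x \<notin> A"
      proof
        assume "x \<in> A"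
        moreover have "x \<in> X closure_of {x}" using xX closure_of_subset[of "{x}" X] by blast
        ultimately show False using nB by blast
      qed
      have xp: "x = p"
      proof (rule ccontr)
        assume "x \<noteq> p"
        then have "openin X {x}" using iso xX by blast
        then have "\<exists>y. y \<in> A \<and> y \<in> {x}" using Ax unfolding in_closure_of by blast
        then show False using xA by blast
      qed
      have Au: "uncountable A" using nB Ax by blast
      have "\<not> grothendieck X"
      proof (rule notG[of A])
        show "A \<subseteq> topspace X" using Ax by blast
        show "uncountable A" by (rule Au)
        fix C assume C: "C \<subseteq> A" "countable C"
        then have "p \<notin> X closure_of C" using nB xp by blast
        then obtain W where W: "p \<in> W" "openin X W" "\<not> (\<exists>y. y \<in> C \<and> y \<in> W)"
          using p unfolding in_closure_of by blast
        show "continuous_map X euclideanreal (chi X C)"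
        proof (rule cont_const_nbhd[OF iso W(2) W(1)])
          show "\<forall>x\<in>W. chi X C x = 0" using W(3) openin_subset[OF W(2)] unfolding chi_def by auto
        qed
      qed
      then show False using G by simp
    qed
  qed
qed

lemma seq_lemma:
  fixes X :: "'a topology" and fs :: "nat \<Rightarrow> 'a \<Rightarrow> real"
  assumes Ssub: "S \<subseteq> topspace (Cp X)" and AS: "A \<subseteq> S"
    and H: "\<forall>B. B \<subseteq> A \<and> infinite B \<longrightarrow> subtopology (PT X) S derived_set_of B \<noteq> {}"
    and fsA: "\<forall>n. fs n \<in> A" and conv: "\<forall>x. (\<lambda>n. fs n x) \<longlonglongrightarrow> h x"
  shows "h \<in> subtopology (PT X) S closure_of A"
proof -
  define Z where "Z = subtopology (PT X) S"
  have SP: "S \<subseteq> topspace (PT X)" using Ssub unfolding topspace_Cp topspace_PT by blast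
  have tZ: "topspace Z = S" unfolding Z_def topspace_subtopology using SP by blast
  have Sext: "\<forall>f\<in>S. f \<in> extensional (topspace X)" using Ssub unfolding topspace_Cp by blast
  have rA: "range fs \<subseteq> A" using fsA by blast
  show ?thesis
  proof (cases "finite (range fs)")
    case True
    then obtain f0 where f0: "f0 \<in> range fs" "infinite (fs -` {f0})"
      using inf_img_fin_domE[of fs UNIV] infinite_UNIV_nat by blast
    have "h = f0"
    proof
      fix x show "h x = f0 x"
      proof (rule ccontr)
        assume ne: "h x \<noteq> f0 x"
        then have pos: "\<bar>h x - f0 x\<bar> > 0" by simp
        have "\<exists>N. \<forall>n\<ge>N. norm (fs n x - h x) < \<bar>h x - f0 x\<bar>"
          using conv pos unfolding LIMSEQ_iff by blast
        then obtain N where N: "\<forall>n\<ge>N. norm (fs n x - h x) < \<bar>h x - f0 x\<bar>" by blast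
        obtain n where n: "n \<ge> N" "n \<in> fs -` {f0}"
          using f0(2) unfolding infinite_nat_iff_unbounded_le by blast
        then have "fs n = f0" by simp
        then have "norm (f0 x - h x) < \<bar>h x - f0 x\<bar>" using N n(1) by metis
        then show False by (simp add: abs_minus_commute)
      qed
    qed
    then have "h \<in> A" using f0(1) rA by blast
    moreover have "A \<subseteq> Z closure_of A" using AS tZ closure_of_subset[of A Z] by simp
    ultimately show ?thesis unfolding Z_def by blast
  next
    case False
    then have "Z derived_set_of (range fs) \<noteq> {}" using H rA unfolding Z_def by blast
    then obtain z where z: "z \<in> Z derived_set_of (range fs)" by blast
    have zS: "z \<in> S" using z derived_set_of_subset_topspace[of Z "range fs"] tZ by blast
    have "h = z"
    proof
      fix x show "h x = z x"
      proof (cases "x \<in> topspace X")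
        case False
        have zx: "z x = undefined" using zS Sext False unfolding extensional_def by blast
        have "fs n x = undefined" for n using fsA AS Sext False unfolding extensional_def by blast
        then have "(\<lambda>n. fs n x) = (\<lambda>n. undefined)" by (rule ext)
        moreover have "(\<lambda>n. fs n x) \<longlonglongrightarrow> h x" using conv by blast
        ultimately have "(\<lambda>n. undefined) \<longlonglongrightarrow> h x" by simp
        then have "h x = undefined" by (simp add: LIMSEQ_const_iff)
        then show ?thesis using zx by simp
      next
        case True
        show ?thesis
        proof (rule ccontr)
          assume ne: "h x \<noteq> z x"
          define d where "d = \<bar>z x - h x\<bar> / 2"
          have dpos: "d > 0" using ne unfolding d_def by simp
          have "\<exists>N. \<forall>n\<ge>N. norm (fs n x - h x) < d"
            using conv dpos unfolding LIMSEQ_iff by blast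
          then obtain N where N: "\<forall>n\<ge>N. norm (fs n x - h x) < d" by blast
          define U where "U = {w \<in> topspace Z. w x \<in> ball (z x) d}"
          have oU: "openin Z U" unfolding U_def Z_def by (rule open_coord[OF True open_ball])
          have zU: "z \<in> U" unfolding U_def using zS tZ dpos by simp
          have sub: "range fs \<inter> U \<subseteq> insert z (fs ` {..<N})"
          proof
            fix w assume w: "w \<in> range fs \<inter> U"
            then obtain n where n: "w = fs n" by blast
            have "dist (z x) (fs n x) < d" using w n unfolding U_def by simp
            then have c1: "\<bar>z x - fs n x\<bar> < d" by (simp add: dist_real_def)
            have "n < N"
            proof (rule ccontr)
              assume "\<not> n < N"
              then have "\<bar>fs n x - h x\<bar> < d" using N by simp
              then have "\<bar>z x - h x\<bar> < 2 * d" using c1 by linarith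
              then show False unfolding d_def by simp
            qed
            then show "w \<in> insert z (fs ` {..<N})" using n by blast
          qed
          show False
            by (rule acc_contra[OF _ z oU zU _ sub]) (simp_all add: Z_def t1_PT_sub)
        qed
      qed
    qed
    then have "h \<in> Z derived_set_of (range fs)" using z by simp
    then have "h \<in> Z closure_of (range fs)" using derived_set_of_subset_closure_of[of Z "range fs"] by blast
    then show ?thesis using closure_of_mono[OF rA] unfolding Z_def by blast
  qed
qed

lemma finite_in_chain:
  fixes Ys :: "nat \<Rightarrow> 'a set"
  assumes mono: "\<And>m n. m \<le> n \<Longrightarrow> Ys m \<subseteq> Ys n"
  shows "finite F \<Longrightarrow> F \<subseteq> (\<Union>n. Ys n) \<Longrightarrow> \<exists>n. F \<subseteq> Ys n"
proof (induction F rule: finite_induct)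
  case empty then show ?case by blast
next
  case (insert x F)
  then obtain m where m: "x \<in> Ys m" by blast
  obtain k where k: "F \<subseteq> Ys k" using insert by blast
  have "Ys m \<subseteq> Ys (max m k)" "Ys k \<subseteq> Ys (max m k)" using mono by simp_all
  then have "insert x F \<subseteq> Ys (max m k)" using m k by blast
  then show ?case by blast
qed

lemma construct:
  fixes X :: "'a topology" and A :: "('a \<Rightarrow> real) set" and g :: "'a \<Rightarrow> real"
  assumes Y0: "countable Y0" "Y0 \<subseteq> topspace X"
    and approxA: "\<forall>F e. finite F \<and> F \<subseteq> topspace X \<and> e > 0 \<longrightarrow> (\<exists>f\<in>A. \<forall>x\<in>F. \<bar>f x - g x\<bar> < e)"
    and supp: "\<forall>f\<in>A. countable {x \<in> topspace X. f x \<noteq> f p}"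
  shows "\<exists>Y A'. countable Y \<and> Y0 \<subseteq> Y \<and> Y \<subseteq> topspace X \<and> A' \<subseteq> A \<and>
     (\<forall>f\<in>A'. \<forall>x\<in>topspace X - Y. f x = f p) \<and>
     (\<forall>F e. finite F \<and> F \<subseteq> Y \<and> e > 0 \<longrightarrow> (\<exists>f\<in>A'. \<forall>x\<in>F. \<bar>f x - g x\<bar> < e))"
proof -
  define good where "good Y A' \<longleftrightarrow> countable A' \<and> A' \<subseteq> A \<and>
     (\<forall>F n. finite F \<and> F \<subseteq> Y \<longrightarrow> (\<exists>f\<in>A'. \<forall>x\<in>F. \<bar>f x - g x\<bar> < 1 / Suc n))" for Y A'
  have ex: "\<exists>A'. good Y A'" if Y: "countable Y" "Y \<subseteq> topspace X" for Y
  proof -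
    define I where "I = {F. finite F \<and> F \<subseteq> Y} \<times> (UNIV :: nat set)"
    have Ic: "countable I" unfolding I_def
      using countable_Collect_finite_subset[OF Y(1)] by simp
    have "\<forall>i\<in>I. \<exists>f\<in>A. \<forall>x\<in>fst i. \<bar>f x - g x\<bar> < 1 / Suc (snd i)"
    proof
      fix i assume "i \<in> I"
      then have "finite (fst i)" "fst i \<subseteq> topspace X" using Y(2) unfolding I_def by auto
      moreover have "(1::real) / Suc (snd i) > 0" by simp
      ultimately show "\<exists>f\<in>A. \<forall>x\<in>fst i. \<bar>f x - g x\<bar> < 1 / Suc (snd i)"
        using approxA by blast
    qed
    then obtain ch where ch: "\<forall>i\<in>I. ch i \<in> A \<and> (\<forall>x\<in>fst i. \<bar>ch i x - g x\<bar> < 1 / Suc (snd i))"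
      by metis
    have "good Y (ch ` I)" unfolding good_def
    proof (intro conjI allI impI)
      show "countable (ch ` I)" using Ic by simp
      show "ch ` I \<subseteq> A" using ch by blast
      fix F n assume "finite F \<and> F \<subseteq> Y"
      then have "(F, n) \<in> I" unfolding I_def by simp
      then show "\<exists>f\<in>ch ` I. \<forall>x\<in>F. \<bar>f x - g x\<bar> < 1 / Suc n" using ch by force
    qed
    then show ?thesis by blast
  qed
  define nA where "nA Y = (SOME A'. good Y A')" for Y
  define nY where "nY Y = Y \<union> (\<Union>f\<in>nA Y. {x \<in> topspace X. f x \<noteq> f p})" for Y
  define Ys where "Ys n = (nY ^^ n) Y0" for n
  have Ys0: "Ys 0 = Y0" and YsS: "Ys (Suc n) = nY (Ys n)" for n by (simp_all add: Ys_def)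
  have goodI: "good Y (nA Y)" if "countable Y" "Y \<subseteq> topspace X" for Y
    unfolding nA_def using ex[OF that] by (rule someI_ex)
  have inv: "countable (Ys n) \<and> Ys n \<subseteq> topspace X" for n
  proof (induction n)
    case 0 then show ?case using Y0 Ys0 by simp
  next
    case (Suc n)
    then have gd: "good (Ys n) (nA (Ys n))" using goodI by blast
    have "countable (\<Union>f\<in>nA (Ys n). {x \<in> topspace X. f x \<noteq> f p})"
    proof (rule countable_UN)
      show "countable (nA (Ys n))" using gd unfolding good_def by blast
      fix f assume "f \<in> nA (Ys n)"
      then have "f \<in> A" using gd unfolding good_def by blast
      then show "countable {x \<in> topspace X. f x \<noteq> f p}" using supp by blast
    qed
    then show ?case using Suc unfolding YsS nY_def by auto
  qed
  have goodn: "good (Ys n) (nA (Ys n))" for n using goodI inv by blast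
  have step: "Ys n \<subseteq> Ys (Suc n)" for n unfolding YsS nY_def by blast
  have mono: "Ys m \<subseteq> Ys n" if "m \<le> n" for m n
    using lift_Suc_mono_le[of Ys, OF step that] .
  define Y where "Y = (\<Union>n. Ys n)"
  define A' where "A' = (\<Union>n. nA (Ys n))"
  show ?thesis
  proof (intro exI conjI)
    show "countable Y" unfolding Y_def
    proof (rule countable_UN)
      show "countable (UNIV :: nat set)" by simp
      fix n show "countable (Ys n)" using inv by blast
    qed
    show "Y0 \<subseteq> Y" unfolding Y_def using Ys0 by blast
    show "Y \<subseteq> topspace X" unfolding Y_def using inv by blast
    show "A' \<subseteq> A" unfolding A'_def using goodn unfolding good_def by blast
    show "\<forall>f\<in>A'. \<forall>x\<in>topspace X - Y. f x = f p"
    proof (intro ballI)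
      fix f x assume f: "f \<in> A'" and x: "x \<in> topspace X - Y"
      then obtain n where n: "f \<in> nA (Ys n)" unfolding A'_def by blast
      show "f x = f p"
      proof (rule ccontr)
        assume "f x \<noteq> f p"
        then have "x \<in> Ys (Suc n)" using n x unfolding YsS nY_def by blast
        then show False using x unfolding Y_def by blast
      qed
    qed
    show "\<forall>F e. finite F \<and> F \<subseteq> Y \<and> e > 0 \<longrightarrow> (\<exists>f\<in>A'. \<forall>x\<in>F. \<bar>f x - g x\<bar> < e)"
    proof (intro allI impI)
      fix F and e :: real assume Fe: "finite F \<and> F \<subseteq> Y \<and> e > 0"
      have FY: "finite F" "F \<subseteq> (\<Union>n. Ys n)" and epos: "e > 0" using Fe unfolding Y_def by auto
      obtain n where n: "F \<subseteq> Ys n" using finite_in_chain[of Ys F, OF mono FY] by blast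
      obtain k where k: "inverse (real (Suc k)) < e" using reals_Archimedean[OF epos] by blast
      obtain f where f: "f \<in> nA (Ys n)" "\<forall>x\<in>F. \<bar>f x - g x\<bar> < 1 / Suc k"
        using goodn[of n] n Fe unfolding good_def by blast
      have "\<forall>x\<in>F. \<bar>f x - g x\<bar> < e"
      proof
        fix x assume "x \<in> F"
        then have "\<bar>f x - g x\<bar> < 1 / Suc k" using f(2) by blast
        then show "\<bar>f x - g x\<bar> < e" using k by (simp add: divide_inverse)
      qed
      then show "\<exists>f\<in>A'. \<forall>x\<in>F. \<bar>f x - g x\<bar> < e" using f(1) unfolding A'_def by blast
    qed
  qed
qed

lemma seqs:
  fixes X :: "'a topology" and A :: "('a \<Rightarrow> real) set" and g :: "'a \<Rightarrow> real"
  assumes Y: "countable Y" "p \<in> Y" "Y \<subseteq> topspace X" and A'A: "A' \<subseteq> A"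
    and Aext: "\<forall>f\<in>A. f \<in> extensional (topspace X)"
    and const: "\<forall>f\<in>A'. \<forall>x\<in>topspace X - Y. f x = f p"
    and approx: "\<forall>F e. finite F \<and> F \<subseteq> Y \<and> e > 0 \<longrightarrow> (\<exists>f\<in>A'. \<forall>x\<in>F. \<bar>f x - g x\<bar> < e)"
  shows "\<exists>fs. (\<forall>n. fs n \<in> A) \<and> (\<forall>x. (\<lambda>n. fs n x) \<longlonglongrightarrow>
      (if x \<in> Y then g x else if x \<in> topspace X then g p else undefined))"
proof -
  define e where "e = from_nat_into Y"
  have Yne: "Y \<noteq> {}" using Y(2) by blast
  have "\<forall>n. \<exists>f\<in>A'. \<forall>x\<in>e ` {..n}. \<bar>f x - g x\<bar> < 1 / Suc n"
  proof
    fix n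
    have "finite (e ` {..n})" by simp
    moreover have "e ` {..n} \<subseteq> Y" unfolding e_def using from_nat_into[OF Yne] by blast
    moreover have "(1::real) / Suc n > 0" by simp
    ultimately show "\<exists>f\<in>A'. \<forall>x\<in>e ` {..n}. \<bar>f x - g x\<bar> < 1 / Suc n" using approx by blast
  qed
  then obtain fs where fs: "\<forall>n. fs n \<in> A' \<and> (\<forall>x\<in>e ` {..n}. \<bar>fs n x - g x\<bar> < 1 / Suc n)"
    by metis
  have key: "(\<lambda>n. fs n y) \<longlonglongrightarrow> g y" if y: "y \<in> Y" for y
  proof -
    obtain i where i: "e i = y" unfolding e_def using from_nat_into_surj[OF Y(1) y] by blast
    show ?thesis unfolding LIMSEQ_iff
    proof (intro allI impI)
      fix r :: real assume r: "r > 0"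
      obtain k where k: "inverse (real (Suc k)) < r" using r reals_Archimedean by blast
      show "\<exists>no. \<forall>n\<ge>no. norm (fs n y - g y) < r"
      proof (intro exI allI impI)
        fix n assume n: "max i k \<le> n"
        then have "y \<in> e ` {..n}" using i by force
        then have "\<bar>fs n y - g y\<bar> < 1 / Suc n" using fs by blast
        moreover have "1 / real (Suc n) \<le> 1 / Suc k" using n by (simp add: frac_le)
        moreover have "1 / real (Suc k) = inverse (real (Suc k))" by (simp add: divide_inverse)
        ultimately have "\<bar>fs n y - g y\<bar> < r" using k by (metis less_le_trans order.strict_trans)
        then show "norm (fs n y - g y) < r" by simp
      qed
    qed
  qed
  show ?thesis
  proof (intro exI conjI allI)
    fix n show "fs n \<in> A" using fs A'A by blast
  next
    fix x
    show "(\<lambda>n. fs n x) \<longlonglongrightarrow> (if x \<in> Y then g x else if x \<in> topspace X then g p else undefined)"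
    proof (cases "x \<in> Y")
      case True then show ?thesis using key by simp
    next
      case nY: False
      show ?thesis
      proof (cases "x \<in> topspace X")
        case True
        then have "(\<lambda>n. fs n x) = (\<lambda>n. fs n p)" using fs const nY by auto
        then show ?thesis using key[OF Y(2)] nY True by simp
      next
        case False
        then have "fs n x = undefined" for n
          using fs A'A Aext unfolding extensional_def by blast
        then show ?thesis using nY False by simp
      qed
    qed
  qed
qed

lemma groth_suff:
  fixes X :: "'a topology"
  assumes p: "p \<in> topspace X" and iso: "\<forall>x\<in>topspace X. x \<noteq> p \<longrightarrow> openin X {x}"
    and L: "Lindelof_space X" and tight: "countably_tight X"
  shows "grothendieck X"
  unfolding grothendieck_def
proof (intro allI impI)
  fix S assume Ssub: "S \<subseteq> topspace (Cp X)"
  define Z where "Z = subtopology (PT X) S"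
  have SP: "S \<subseteq> topspace (PT X)" using Ssub unfolding topspace_Cp topspace_PT by blast
  have Zeq: "subtopology (Cp X) S = Z" using Cp_sub[OF Ssub] unfolding Z_def by simp
  have tZ: "topspace Z = S" unfolding Z_def topspace_subtopology using SP by blast
  have Scont: "\<forall>f\<in>S. continuous_map X euclideanreal f \<and> f \<in> extensional (topspace X)"
    using Ssub unfolding topspace_Cp by blast
  show "g_space (subtopology (Cp X) S)" unfolding Zeq g_space_def
  proof (intro allI impI)
    fix A assume A: "A \<subseteq> topspace Z \<and> (\<forall>B. B \<subseteq> A \<and> infinite B \<longrightarrow> Z derived_set_of B \<noteq> {})"
    have AS: "A \<subseteq> S" using A tZ by blast
    have H: "\<forall>B. B \<subseteq> A \<and> infinite B \<longrightarrow> Z derived_set_of B \<noteq> {}" using A by blast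
    have Acont: "\<forall>f\<in>A. continuous_map X euclideanreal f \<and> f \<in> extensional (topspace X)"
      using Scont AS by blast
    have bnd: "\<exists>M. \<forall>f\<in>A. \<bar>f x\<bar> \<le> M" for x
    proof (cases "x \<in> topspace X")
      case False
      then have "\<forall>f\<in>A. f x = undefined" using Acont unfolding extensional_def by blast
      show ?thesis
      proof (intro exI[of _ "\<bar>undefined::real\<bar>"] ballI)
        fix f assume "f \<in> A"
        then have "f x = undefined" using Acont False unfolding extensional_def by blast
        then show "\<bar>f x\<bar> \<le> \<bar>undefined::real\<bar>" by simp
      qed
    next
      case True
      show ?thesis
      proof (rule ccontr)
        assume nb: "\<not> (\<exists>M. \<forall>f\<in>A. \<bar>f x\<bar> \<le> M)"
        have "\<forall>n::nat. \<exists>f\<in>A. \<bar>f x\<bar> > real n"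
        proof
          fix n :: nat
          show "\<exists>f\<in>A. \<bar>f x\<bar> > real n" using nb by (meson not_le)
        qed
        then obtain fs where fs: "\<forall>n. fs n \<in> A \<and> \<bar>fs n x\<bar> > real n" by metis
        have rA: "range fs \<subseteq> A" using fs by blast
        have inf: "infinite (range fs)"
        proof
          assume "finite (range fs)"
          then have "finite ((\<lambda>f. \<bar>f x\<bar>) ` range fs)" by simp
          then have "bdd_above ((\<lambda>f. \<bar>f x\<bar>) ` range fs)" by (rule bdd_above_finite)
          then obtain M where M: "\<forall>v\<in>(\<lambda>f. \<bar>f x\<bar>) ` range fs. v \<le> M"
            unfolding bdd_above_def by blast
          have "\<bar>fs (nat \<lceil>M\<rceil>) x\<bar> \<le> M" using M by blast
          moreover have "\<bar>fs (nat \<lceil>M\<rceil>) x\<bar> > real (nat \<lceil>M\<rceil>)" using fs by blast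
          moreover have "real (nat \<lceil>M\<rceil>) \<ge> M" by (rule real_nat_ceiling_ge)
          ultimately show False by linarith
        qed
        then have "Z derived_set_of (range fs) \<noteq> {}" using H rA by blast
        then obtain z where z: "z \<in> Z derived_set_of (range fs)" by blast
        have zS: "z \<in> topspace Z" using z derived_set_of_subset_topspace[of Z "range fs"] by blast
        define N where "N = nat \<lceil>\<bar>z x\<bar> + 1\<rceil>"
        define U where "U = {w \<in> topspace Z. w x \<in> ball (z x) 1}"
        have oU: "openin Z U" unfolding U_def Z_def by (rule open_coord[OF True open_ball])
        have zU: "z \<in> U" unfolding U_def using zS by simp
        have sub: "range fs \<inter> U \<subseteq> insert z (fs ` {..N})"
        proof
          fix w assume w: "w \<in> range fs \<inter> U"
          then obtain n where n: "w = fs n" by blast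
          have "dist (z x) (fs n x) < 1" using w n unfolding U_def by simp
          then have c1: "\<bar>z x - fs n x\<bar> < 1" by (simp add: dist_real_def)
          have c2: "\<bar>fs n x\<bar> > real n" using fs by blast
          have c3: "real N \<ge> \<bar>z x\<bar> + 1" unfolding N_def by (rule real_nat_ceiling_ge)
          have "real n < real N" using c1 c2 c3 by linarith
          then have "n \<le> N" by simp
          then show "w \<in> insert z (fs ` {..N})" using n by blast
        qed
        show False
          by (rule acc_contra[OF _ z oU zU _ sub]) (simp_all add: Z_def t1_PT_sub)
      qed
    qed
    then obtain M where M: "\<forall>x. \<forall>f\<in>A. \<bar>f x\<bar> \<le> M x" by metis
    define K where "K = PT X closure_of A"
    define B where "B = PiE (topspace X) (\<lambda>x. {- M x..M x})"
    have cB: "closedin (PT X) B" unfolding B_def closedin_product_topology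
      by (simp add: closed_closedin[symmetric])
    have AB: "A \<subseteq> B"
    proof
      fix f assume f: "f \<in> A"
      show "f \<in> B" unfolding B_def
      proof (rule PiE_I)
        fix x assume "x \<in> topspace X"
        have "\<bar>f x\<bar> \<le> M x" using M f by blast
        then show "f x \<in> {- M x..M x}" by (simp add: abs_le_iff)
      next
        fix x assume "x \<notin> topspace X"
        then show "f x = undefined" using Acont f unfolding extensional_def by blast
      qed
    qed
    have KB: "K \<subseteq> B" unfolding K_def by (rule closure_of_minimal[OF AB cB])
    have compB: "compactin (PT X) B" unfolding B_def compactin_PiE
      by (simp add: compactin_euclidean_iff)
    have Kc: "compactin (PT X) K" using closed_compactin[OF compB KB] unfolding K_def
      using closedin_closure_of by blast
    have key: "K \<subseteq> Z closure_of A"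
    proof
      fix g assume gK: "g \<in> K"
      have gP: "g \<in> extensional (topspace X)"
        using gK closure_of_subset_topspace[of "PT X" A] unfolding K_def topspace_PT by blast
      have approxA: "\<exists>f\<in>A. \<forall>x\<in>F. \<bar>f x - g x\<bar> < e"
        if F: "finite F" "F \<subseteq> topspace X" and e: "e > 0" for F e
      proof -
        define V where "V = PiE (topspace X) (\<lambda>x. if x \<in> F then ball (g x) e else UNIV)"
        have "{i \<in> topspace X. (if i \<in> F then ball (g i) e else UNIV) \<noteq> topspace euclideanreal} \<subseteq> F"
          by auto
        then have fin: "finite {i \<in> topspace X. (if i \<in> F then ball (g i) e else UNIV) \<noteq> topspace euclideanreal}"
          using F(1) finite_subset by blast
        have oV: "openin (PT X) V" unfolding V_def openin_PiE_gen
          using fin by (simp add: open_openin[symmetric])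
        have gV: "g \<in> V" unfolding V_def
        proof (rule PiE_I)
          fix x assume "x \<in> topspace X"
          show "g x \<in> (if x \<in> F then ball (g x) e else UNIV)" using e by simp
        next
          fix x assume "x \<notin> topspace X"
          then show "g x = undefined" using gP unfolding extensional_def by blast
        qed
        have "\<exists>y. y \<in> A \<and> y \<in> V" using gK oV gV unfolding K_def in_closure_of by blast
        then obtain y where y: "y \<in> A" "y \<in> V" by blast
        have "\<forall>x\<in>F. \<bar>y x - g x\<bar> < e"
        proof
          fix x assume x: "x \<in> F"
          then have "y x \<in> ball (g x) e" using y(2) F(2) unfolding V_def PiE_def Pi_def by auto
          then show "\<bar>y x - g x\<bar> < e" by (simp add: dist_real_def abs_minus_commute)
        qed
        then show ?thesis using y(1) by blast
      qed
      have supp: "countable {x \<in> topspace X. f x \<noteq> f p}" if "f \<in> A" for f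
        using cont_support[OF L iso p] Acont that by blast
      have Aext: "\<forall>f\<in>A. f \<in> extensional (topspace X)" using Acont by blast
      have approxO: "\<forall>F e. finite F \<and> F \<subseteq> topspace X \<and> e > 0 \<longrightarrow> (\<exists>f\<in>A. \<forall>x\<in>F. \<bar>f x - g x\<bar> < e)"
        using approxA by blast
      have suppO: "\<forall>f\<in>A. countable {x \<in> topspace X. f x \<noteq> f p}" using supp by blast
      have seqZ: "(\<lambda>x. if x \<in> Y then g x else if x \<in> topspace X then g p else undefined) \<in> Z closure_of A"
        if Y: "countable Y" "p \<in> Y" "Y \<subseteq> topspace X" and A'A: "A' \<subseteq> A"
          and const: "\<forall>f\<in>A'. \<forall>x\<in>topspace X - Y. f x = f p"
          and approx: "\<forall>F e. finite F \<and> F \<subseteq> Y \<and> e > 0 \<longrightarrow> (\<exists>f\<in>A'. \<forall>x\<in>F. \<bar>f x - g x\<bar> < e)"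
        for Y A'
      proof -
        obtain fs where fs: "\<forall>n. fs n \<in> A" "\<forall>x. (\<lambda>n. fs n x) \<longlonglongrightarrow>
            (if x \<in> Y then g x else if x \<in> topspace X then g p else undefined)"
          using seqs[OF Y A'A Aext const approx] by blast
        show ?thesis unfolding Z_def
          by (rule seq_lemma[OF Ssub AS _ fs(1) fs(2)]) (use H in \<open>simp add: Z_def\<close>)
      qed
      have cnt: "countable {x \<in> topspace X. g x \<noteq> g p}"
      proof (rule ccontr)
        assume nc: "uncountable {x \<in> topspace X. g x \<noteq> g p}"
        define E where "E k = {x \<in> topspace X. \<bar>g x - g p\<bar> \<ge> 1 / Suc k}" for k :: nat
        have Esub: "{x \<in> topspace X. g x \<noteq> g p} \<subseteq> (\<Union>k. E k)"
        proof
          fix x assume x: "x \<in> {x \<in> topspace X. g x \<noteq> g p}"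
          then have "\<bar>g x - g p\<bar> > 0" by simp
          then obtain k where "inverse (real (Suc k)) < \<bar>g x - g p\<bar>" using reals_Archimedean by blast
          then have "x \<in> E k" using x unfolding E_def by (simp add: divide_inverse)
          then show "x \<in> (\<Union>k. E k)" by blast
        qed
        have "\<exists>k. uncountable (E k)"
        proof (rule ccontr)
          assume "\<not> (\<exists>k. uncountable (E k))"
          then have "countable (\<Union>k. E k)" by simp
          then have "countable {x \<in> topspace X. g x \<noteq> g p}" by (rule countable_subset[OF Esub])
          then show False using nc by simp
        qed
        then obtain k where Eu: "uncountable (E k)" by blast
        have EX: "E k \<subseteq> topspace X" unfolding E_def by blast
        have pE: "p \<in> X closure_of (E k)" unfolding in_closure_of
        proof (intro conjI allI impI)
          show "p \<in> topspace X" by (rule p)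
          fix T assume T: "p \<in> T \<and> openin X T"
          then have "countable (topspace X - T)" using cocountable[OF L iso] by blast
          then have "\<not> E k \<subseteq> topspace X - T" using Eu countable_subset by blast
          then show "\<exists>y. y \<in> E k \<and> y \<in> T" using EX by blast
        qed
        have "\<forall>A x. A \<subseteq> topspace X \<and> x \<in> X closure_of A \<longrightarrow>
            (\<exists>B. B \<subseteq> A \<and> countable B \<and> x \<in> X closure_of B)"
          using tight unfolding countably_tight_def .
        then obtain Bc where Bc: "Bc \<subseteq> E k" "countable Bc" "p \<in> X closure_of Bc"
          using EX pE by blast
        have c1: "countable (insert p Bc)" using Bc by simp
        have c2: "insert p Bc \<subseteq> topspace X" using Bc(1) EX p by blast
        obtain Y A' where YA: "countable Y" "insert p Bc \<subseteq> Y" "Y \<subseteq> topspace X" "A' \<subseteq> A"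
          "\<forall>f\<in>A'. \<forall>x\<in>topspace X - Y. f x = f p"
          "\<forall>F e. finite F \<and> F \<subseteq> Y \<and> e > 0 \<longrightarrow> (\<exists>f\<in>A'. \<forall>x\<in>F. \<bar>f x - g x\<bar> < e)"
          using construct[of "insert p Bc" X A g p, OF c1 c2 approxO suppO] by (elim exE conjE)
        define h where "h = (\<lambda>x. if x \<in> Y then g x else if x \<in> topspace X then g p else undefined)"
        have pY: "p \<in> Y" using YA(2) by blast
        have hZ: "h \<in> Z closure_of A" unfolding h_def
          by (rule seqZ[OF YA(1) pY YA(3) YA(4) YA(5) YA(6)])
        then have "h \<in> S" using closure_of_subset_topspace[of Z A] unfolding tZ by blast
        then have hc: "continuous_map X euclideanreal h" using Scont by blast
        have hp: "h p = g p" using YA(2) unfolding h_def by simp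
        have "openin euclideanreal (ball (h p) (1 / Suc k))" by (metis open_ball open_openin)
        then have oO: "openin X {x \<in> topspace X. h x \<in> ball (h p) (1 / Suc k)}"
          using openin_continuous_map_preimage[OF hc] by blast
        define Ost where "Ost = {x \<in> topspace X. h x \<in> ball (h p) (1 / Suc k)}"
        have oO': "openin X Ost" unfolding Ost_def by (rule oO)
        have "h p \<in> ball (h p) (1 / Suc k)" by simp
        then have pO: "p \<in> Ost" unfolding Ost_def using p by blast
        have "\<forall>T. p \<in> T \<and> openin X T \<longrightarrow> (\<exists>y. y \<in> Bc \<and> y \<in> T)"
          using Bc(3) unfolding in_closure_of by (elim conjE)
        then have "\<exists>y. y \<in> Bc \<and> y \<in> Ost" using oO' pO by blast
        then obtain y where y1: "y \<in> Bc" and y2: "y \<in> Ost" by blast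
        have "y \<in> Y" using y1 YA(2) by blast
        then have hy: "h y = g y" unfolding h_def by simp
        have "h y \<in> ball (h p) (1 / Suc k)" using y2 unfolding Ost_def by blast
        then have "dist (h p) (h y) < 1 / Suc k" by (simp only: mem_ball)
        then have "\<bar>g y - g p\<bar> < 1 / Suc k" unfolding hy hp dist_real_def by (simp add: abs_minus_commute)
        moreover have "y \<in> E k" using y1 Bc(1) by blast
        then have "\<bar>g y - g p\<bar> \<ge> 1 / Suc k" unfolding E_def by blast
        ultimately show False by simp
      qed
      have c1: "countable (insert p {x \<in> topspace X. g x \<noteq> g p})" using cnt by simp
      have c2: "insert p {x \<in> topspace X. g x \<noteq> g p} \<subseteq> topspace X" using p by blast
      obtain Y A' where YA: "countable Y" "insert p {x \<in> topspace X. g x \<noteq> g p} \<subseteq> Y" "Y \<subseteq> topspace X" "A' \<subseteq> A"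
          "\<forall>f\<in>A'. \<forall>x\<in>topspace X - Y. f x = f p"
          "\<forall>F e. finite F \<and> F \<subseteq> Y \<and> e > 0 \<longrightarrow> (\<exists>f\<in>A'. \<forall>x\<in>F. \<bar>f x - g x\<bar> < e)"
        using construct[of "insert p {x \<in> topspace X. g x \<noteq> g p}" X A g p, OF c1 c2 approxO suppO]
        by (elim exE conjE)
      have pY: "p \<in> Y" using YA(2) by blast
      have hZ: "(\<lambda>x. if x \<in> Y then g x else if x \<in> topspace X then g p else undefined) \<in> Z closure_of A"
        by (rule seqZ[OF YA(1) pY YA(3) YA(4) YA(5) YA(6)])
      moreover have "(\<lambda>x. if x \<in> Y then g x else if x \<in> topspace X then g p else undefined) = g"
      proof
        fix x show "(if x \<in> Y then g x else if x \<in> topspace X then g p else undefined) = g x"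
          using YA(2) gP unfolding extensional_def by auto
      qed
      ultimately show "g \<in> Z closure_of A" by simp
    qed
    have "Z closure_of A = S \<inter> PT X closure_of (S \<inter> A)" unfolding Z_def by (rule closure_of_subtopology)
    moreover have "S \<inter> A = A" using AS by blast
    ultimately have ZK: "Z closure_of A = S \<inter> K" unfolding K_def by simp
    then have ZK2: "Z closure_of A = K" using key by blast
    have KS: "K \<subseteq> S" using key closure_of_subset_topspace[of Z A] unfolding tZ by blast
    have "compactin Z K" unfolding Z_def compactin_subtopology using Kc KS by blast
    then show "compactin Z (Z closure_of A)" using ZK2 by simp
  qed
qed

theorem corollary1:
  fixes X :: "'a topology"
  assumes "tychonoff_space X" and "almost_discrete X"
  shows "grothendieck X \<longleftrightarrow> Lindelof_space X \<and> countably_tight X"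
proof -
  obtain p where p: "p \<in> topspace X" "\<not> isolated_point X p"
    and uniq: "\<And>x. x \<in> topspace X \<and> \<not> isolated_point X x \<Longrightarrow> x = p"
    using assms(2) unfolding almost_discrete_def by blast
  have iso: "\<forall>x\<in>topspace X. x \<noteq> p \<longrightarrow> openin X {x}"
    using uniq unfolding isolated_point_def by blast
  show ?thesis
  proof
    assume "grothendieck X"
    then show "Lindelof_space X \<and> countably_tight X" by (rule groth_nec[OF p(1) iso])
  next
    assume "Lindelof_space X \<and> countably_tight X"
    then show "grothendieck X" using groth_suff[OF p(1) iso] by blast
  qed
qed

end
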